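(* Let $0\to M\xrightarrow{i}\Lambda\xrightarrow{d}B\to0$ be an exact sequence of lattices, $P\subset\Lambda_\mathbb{Q}$ a polyhedron, and $F\subset P$ an $M$-stable face. Then $(N_{F_M}P_M)^\vee=(N_FP)^\vee\cap M_\mathbb{Q}$.
   Context: Notation: $P_M=P\cap M_\mathbb{Q}$, $F_M=F\cap M_\mathbb{Q}$ (identifying $M$ with $i(M)$). For $y\in\Lambda^\vee_\mathbb{Q}$, $\mathrm{face}_y(P)=\{x\in P:\langle x,y\rangle=\min_P\langle-,y\rangle\}$; faces are the nonempty sets of this form; $N_FP=\{y\in\Lambda^\vee_\mathbb{Q}:\mathrm{face}_y(P)\supset F\}$, and analogously $N_{F_M}P_M\subset M^\vee_\mathbb{Q}$. For a cone $\sigma$ in a dual space, $\sigma^\vee$ denotes the dual cone $\{x:\langle x,\sigma\rangle\ge0\}$. $\langle F\rangle$ is the span of the differences of elements of $F$; $F$ is $M$-stable if the relative interior of $F$ meets $M_\mathbb{Q}$ and $\langle F\rangle+M_\mathbb{Q}=\Lambda_\mathbb{Q}$. *)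

theory Defs
  imports Complex_Main
begin

text \<open>Coordinates: a lattice of rank k is identified with Z^k, its rationalisation
with Q^k.  Vectors are functions nat => _ vanishing outside {..<k}.
Integer matrices are functions nat => nat => int (row, column).\<close>

definition zvec :: "nat \<Rightarrow> (nat \<Rightarrow> int) set" where
  "zvec k = {x. \<forall>i\<ge>k. x i = 0}"

definition qvec :: "nat \<Rightarrow> (nat \<Rightarrow> rat) set" where
  "qvec k = {x. \<forall>i\<ge>k. x i = 0}"

definition mapZ :: "nat \<Rightarrow> nat \<Rightarrow> (nat \<Rightarrow> nat \<Rightarrow> int) \<Rightarrow> (nat \<Rightarrow> int) \<Rightarrow> (nat \<Rightarrow> int)" where
  "mapZ n m A x = (\<lambda>i. if i < n then (\<Sum>j<m. A i j * x j) else 0)"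

definition mapQ :: "nat \<Rightarrow> nat \<Rightarrow> (nat \<Rightarrow> nat \<Rightarrow> int) \<Rightarrow> (nat \<Rightarrow> rat) \<Rightarrow> (nat \<Rightarrow> rat)" where
  "mapQ n m A x = (\<lambda>i. if i < n then (\<Sum>j<m. of_int (A i j) * x j) else 0)"

definition short_exact :: "nat \<Rightarrow> nat \<Rightarrow> nat \<Rightarrow> (nat \<Rightarrow> nat \<Rightarrow> int) \<Rightarrow> (nat \<Rightarrow> nat \<Rightarrow> int) \<Rightarrow> bool" where
  "short_exact m n b i d \<longleftrightarrow>
     inj_on (mapZ n m i) (zvec m) \<and>
     mapZ b n d ` zvec n = zvec b \<and>
     {x \<in> zvec n. mapZ b n d x = (\<lambda>_. 0)} = mapZ n m i ` zvec m"

definition pair :: "nat \<Rightarrow> (nat \<Rightarrow> rat) \<Rightarrow> (nat \<Rightarrow> rat) \<Rightarrow> rat" where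
  "pair k x y = (\<Sum>i<k. x i * y i)"

definition polyhedron :: "nat \<Rightarrow> (nat \<Rightarrow> rat) set \<Rightarrow> bool" where
  "polyhedron k P \<longleftrightarrow> (\<exists>H. finite H \<and> (\<forall>(a, c)\<in>H. a \<in> qvec k) \<and>
      P = {x \<in> qvec k. \<forall>(a, c)\<in>H. pair k a x \<ge> c})"

text \<open>face_y(P): the set of minimisers of <-,y> on P (empty if the minimum is not attained).\<close>
definition face_at :: "nat \<Rightarrow> (nat \<Rightarrow> rat) set \<Rightarrow> (nat \<Rightarrow> rat) \<Rightarrow> (nat \<Rightarrow> rat) set" where
  "face_at k P y = {x \<in> P. \<forall>z\<in>P. pair k x y \<le> pair k z y}"

definition is_face :: "nat \<Rightarrow> (nat \<Rightarrow> rat) set \<Rightarrow> (nat \<Rightarrow> rat) set \<Rightarrow> bool" where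
  "is_face k P F \<longleftrightarrow> (\<exists>y\<in>qvec k. F = face_at k P y \<and> F \<noteq> {})"

definition normal_cone :: "nat \<Rightarrow> (nat \<Rightarrow> rat) set \<Rightarrow> (nat \<Rightarrow> rat) set \<Rightarrow> (nat \<Rightarrow> rat) set" where
  "normal_cone k P F = {y \<in> qvec k. F \<subseteq> face_at k P y}"

definition dual_cone :: "nat \<Rightarrow> (nat \<Rightarrow> rat) set \<Rightarrow> (nat \<Rightarrow> rat) set" where
  "dual_cone k \<sigma> = {x \<in> qvec k. \<forall>y\<in>\<sigma>. pair k x y \<ge> 0}"

definition aff_hull :: "nat \<Rightarrow> (nat \<Rightarrow> rat) set \<Rightarrow> (nat \<Rightarrow> rat) set" where
  "aff_hull k S = {y \<in> qvec k. \<exists>(N::nat) (c::nat \<Rightarrow> rat) v. (\<forall>j<N. v j \<in> S) \<and>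
      (\<Sum>j<N. c j) = 1 \<and> y = (\<lambda>i. \<Sum>j<N. c j * v j i)}"

definition diff_span :: "nat \<Rightarrow> (nat \<Rightarrow> rat) set \<Rightarrow> (nat \<Rightarrow> rat) set" where
  "diff_span k S = {y \<in> qvec k. \<exists>(N::nat) (c::nat \<Rightarrow> rat) v w. (\<forall>j<N. v j \<in> S \<and> w j \<in> S) \<and>
      y = (\<lambda>i. \<Sum>j<N. c j * (v j i - w j i))}"

definition rel_interior_q :: "nat \<Rightarrow> (nat \<Rightarrow> rat) set \<Rightarrow> (nat \<Rightarrow> rat) set" where
  "rel_interior_q k S = {x \<in> S. \<exists>e>0. \<forall>y\<in>aff_hull k S.
      (\<Sum>i<k. (y i - x i)^2) < e^2 \<longrightarrow> y \<in> S}"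

text \<open>M-stable face, where M_Q is the image of Q^m under i.\<close>
definition M_stable :: "nat \<Rightarrow> nat \<Rightarrow> (nat \<Rightarrow> nat \<Rightarrow> int) \<Rightarrow> (nat \<Rightarrow> rat) set \<Rightarrow> bool" where
  "M_stable m n i F \<longleftrightarrow>
     (\<exists>x\<in>rel_interior_q n F. x \<in> mapQ n m i ` qvec m) \<and>
     {(\<lambda>j. u j + v j) | u v. u \<in> diff_span n F \<and> v \<in> mapQ n m i ` qvec m} = qvec n"

end

theory Submission
  imports Defs
begin

definition adjQ :: "nat \<Rightarrow> nat \<Rightarrow> (nat \<Rightarrow> nat \<Rightarrow> int) \<Rightarrow> (nat \<Rightarrow> rat) \<Rightarrow> (nat \<Rightarrow> rat)" where
  "adjQ n m A y = (\<lambda>j. if j < m then (\<Sum>k<n. of_int (A k j) * y k) else 0)"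

lemma pair_comm: "pair k x y = pair k y x"
  by (simp add: pair_def mult.commute)

lemma pair_adj: "pair n (mapQ n m A x) y = pair m x (adjQ n m A y)"
proof -
  have "pair n (mapQ n m A x) y = (\<Sum>k<n. \<Sum>j<m. of_int (A k j) * x j * y k)"
    by (simp add: pair_def mapQ_def sum_distrib_right)
  also have "\<dots> = (\<Sum>j<m. \<Sum>k<n. of_int (A k j) * x j * y k)"
    by (rule sum.swap)
  also have "\<dots> = pair m x (adjQ n m A y)"
    by (simp add: pair_def adjQ_def sum_distrib_left mult_ac)
  finally show ?thesis .
qed

lemma adj_qvec: "adjQ n m A y \<in> qvec m"
  by (simp add: qvec_def adjQ_def)

lemma mapQ_qvec: "mapQ n m A x \<in> qvec n"
  by (simp add: qvec_def mapQ_def)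

lemma mapQ_lin: "mapQ n m A (\<lambda>j. u j + e * v j) = (\<lambda>k. mapQ n m A u k + e * mapQ n m A v k)"
  by (auto simp: mapQ_def sum.distrib sum_distrib_left algebra_simps)

lemma pair_lin1: "pair k (\<lambda>j. u j + e * v j) y = pair k u y + e * pair k v y"
  by (simp add: pair_def sum.distrib sum_distrib_left algebra_simps)

lemma pair_lin2: "pair k a (\<lambda>j. u j + e * v j) = pair k a u + e * pair k a v"
  by (simp add: pair_def sum.distrib sum_distrib_left algebra_simps)

lemma relint_active:
  assumes x0: "x0 \<in> rel_interior_q n F" and Fq: "F \<subseteq> qvec n"
    and ge: "\<forall>x\<in>F. pair n a x \<ge> c" and eq: "pair n a x0 = c" and z: "z \<in> F"
  shows "pair n a z = c"
proof (rule ccontr)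
  assume ne: "pair n a z \<noteq> c"
  with ge z have gt: "pair n a z > c" by force
  from x0 obtain e where e: "e>0" and H: "\<forall>y\<in>aff_hull n F. (\<Sum>i<n. (y i - x0 i)^2) < e^2 \<longrightarrow> y \<in> F"
    and x0F: "x0\<in>F" unfolding rel_interior_q_def by blast
  define D where "D = (\<Sum>i<n. (z i - x0 i)^2)"
  have D0: "D \<ge> 0" unfolding D_def by (intro sum_nonneg) auto
  define t where "t = e/(D+1)"
  have t0: "t > 0" using e D0 by (simp add: t_def)
  define p where "p = (\<lambda>i. (1+t) * x0 i - t * z i)"
  have pq: "p \<in> qvec n"
  proof -
    have "x0 \<in> qvec n" "z \<in> qvec n" using Fq x0F z by auto
    thus ?thesis by (simp add: qvec_def p_def)
  qed
  have paff: "p \<in> aff_hull n F"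
    unfolding aff_hull_def
    apply (simp add: pq)
    apply (rule exI[of _ 2], rule exI[of _ "\<lambda>j. if j=0 then 1+t else -t"], rule exI[of _ "\<lambda>j. if j=0 then x0 else z"])
    using x0F z by (auto simp: p_def eval_nat_numeral lessThan_Suc fun_eq_iff)
  have dist: "(\<Sum>i<n. (p i - x0 i)^2) = t^2 * D"
    unfolding D_def sum_distrib_left
    by (rule sum.cong) (auto simp: p_def power2_eq_square algebra_simps)
  have sq: "(D+1)^2 = D*D + 2*D + 1" by (simp add: power2_eq_square algebra_simps)
  have "0 \<le> D*D" using D0 by simp
  hence "D < (D+1)^2" using sq D0 by linarith
  hence "D / (D+1)^2 < 1" using D0 by simp
  hence "e^2 * (D / (D+1)^2) < e^2 * 1" using e by (intro mult_strict_left_mono) auto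
  moreover have "t^2 * D = e^2 * (D / (D+1)^2)" by (simp add: t_def power_divide)
  ultimately have "t^2 * D < e^2" by simp
  with H paff dist have "p \<in> F" by simp
  with ge have "pair n a p \<ge> c" by blast
  moreover have "pair n a p = pair n a x0 + t * pair n a x0 - t * pair n a z"
    by (simp add: pair_def p_def sum_subtractf sum.distrib sum_distrib_left algebra_simps)
  moreover have "t * c < t * pair n a z" using t0 gt by simp
  moreover have "t * pair n a x0 = t * c" using eq by simp
  ultimately show False using eq by linarith
qed

lemma eps_exists:
  assumes "finite H"
    and "\<forall>(a,c)\<in>H. pair k a x0 \<ge> c"
    and "\<forall>(a,c)\<in>H. pair k a x0 = c \<longrightarrow> pair k a w \<ge> 0"
  shows "\<exists>\<epsilon>>0. \<forall>\<delta>. 0 < \<delta> \<and> \<delta> \<le> \<epsilon> \<longrightarrow> (\<forall>(a,c)\<in>H. pair k a (\<lambda>j. x0 j + \<delta> * w j) \<ge> c)"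
  using assms
proof (induction H rule: finite_induct)
  case empty
  then show ?case by (intro exI[of _ 1]) auto
next
  case (insert h H)
  obtain a c where h: "h = (a,c)" by fastforce
  from insert obtain \<epsilon> where e: "\<epsilon>>0" and E: "\<forall>\<delta>. 0 < \<delta> \<and> \<delta> \<le> \<epsilon> \<longrightarrow> (\<forall>(a,c)\<in>H. pair k a (\<lambda>j. x0 j + \<delta> * w j) \<ge> c)"
    by auto
  have ge: "pair k a x0 \<ge> c" using insert.prems h by auto
  have "\<exists>\<eta>>0. \<forall>\<delta>. 0 < \<delta> \<and> \<delta> \<le> \<eta> \<longrightarrow> pair k a (\<lambda>j. x0 j + \<delta> * w j) \<ge> c"
  proof (cases "pair k a x0 = c")
    case True
    then have "pair k a w \<ge> 0" using insert.prems h by auto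
    then show ?thesis using True
      by (intro exI[of _ 1]) (auto simp: pair_lin2)
  next
    case False
    with ge have g: "pair k a x0 > c" by simp
    define \<eta> where "\<eta> = (pair k a x0 - c) / (\<bar>pair k a w\<bar> + 1)"
    have \<eta>0: "\<eta> > 0" using g by (simp add: \<eta>_def)
    have eq1: "\<eta> * \<bar>pair k a w\<bar> + \<eta> = pair k a x0 - c" 
    proof -
      have pos: "\<bar>pair k a w\<bar> + 1 \<noteq> 0" using abs_ge_zero[of "pair k a w"] by linarith
      have "\<eta> * (\<bar>pair k a w\<bar> + 1) = pair k a x0 - c" using pos by (simp add: \<eta>_def)
      thus ?thesis by (simp add: algebra_simps)
    qed
    show ?thesis
    proof (intro exI[of _ \<eta>] conjI \<eta>0 allI impI)
      fix \<delta> :: rat assume d: "0 < \<delta> \<and> \<delta> \<le> \<eta>"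
      have m1: "\<delta> * \<bar>pair k a w\<bar> \<le> \<eta> * \<bar>pair k a w\<bar>" using d by (intro mult_right_mono) auto
      have "\<delta> * (- \<bar>pair k a w\<bar>) \<le> \<delta> * pair k a w" using d
        by (intro mult_left_mono) auto
      hence m2: "- (\<delta> * \<bar>pair k a w\<bar>) \<le> \<delta> * pair k a w" by simp
      have "pair k a (\<lambda>j. x0 j + \<delta> * w j) = pair k a x0 + \<delta> * pair k a w" by (rule pair_lin2)
      then show "pair k a (\<lambda>j. x0 j + \<delta> * w j) \<ge> c"
        using m1 m2 eq1 \<eta>0 by linarith
    qed
  qed
  then obtain \<eta> where h0: "\<eta>>0" and Hh: "\<forall>\<delta>. 0 < \<delta> \<and> \<delta> \<le> \<eta> \<longrightarrow> pair k a (\<lambda>j. x0 j + \<delta> * w j) \<ge> c"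
    by blast
  have "\<forall>\<delta>. 0 < \<delta> \<and> \<delta> \<le> min \<epsilon> \<eta> \<longrightarrow> (\<forall>(a,c)\<in>insert h H. pair k a (\<lambda>j. x0 j + \<delta> * w j) \<ge> c)"
    using E Hh h by auto
  moreover have "min \<epsilon> \<eta> > 0" using e h0 by simp
  ultimately show ?case by blast
qed

theorem mainTheorem6:
  fixes m n b :: nat
    and i d :: "nat \<Rightarrow> nat \<Rightarrow> int"
    and P F :: "(nat \<Rightarrow> rat) set"
  assumes exact: "short_exact m n b i d"
    and poly: "polyhedron n P"
    and face: "is_face n P F"
    and stable: "M_stable m n i F"
  shows "mapQ n m i ` dual_cone m (normal_cone m {x \<in> qvec m. mapQ n m i x \<in> P}
                                                 {x \<in> qvec m. mapQ n m i x \<in> F})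
         = dual_cone n (normal_cone n P F) \<inter> mapQ n m i ` qvec m"
proof -
  let ?I = "mapQ n m i"
  define PM where "PM = {x \<in> qvec m. ?I x \<in> P}"
  define FM where "FM = {x \<in> qvec m. ?I x \<in> F}"
  from poly obtain H where Hf: "finite H" and Hq: "\<forall>(a, c)\<in>H. a \<in> qvec n"
    and Pdef: "P = {x \<in> qvec n. \<forall>(a, c)\<in>H. pair n a x \<ge> c}"
    unfolding polyhedron_def by blast
  from face obtain y0 where "F = face_at n P y0" unfolding is_face_def by blast
  hence FP: "F \<subseteq> P" by (auto simp: face_at_def)
  have Pq: "P \<subseteq> qvec n" using Pdef by auto
  from stable obtain x0 x0' where x0: "x0 \<in> rel_interior_q n F" and x0': "x0' \<in> qvec m" and x0e: "x0 = ?I x0'"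
    unfolding M_stable_def by blast
  have x0F: "x0 \<in> F" using x0 by (simp add: rel_interior_q_def)
  show ?thesis
    unfolding PM_def[symmetric] FM_def[symmetric]
  proof (rule equalityI; rule subsetI)
    fix w assume "w \<in> ?I ` dual_cone m (normal_cone m PM FM)"
    then obtain x where w: "w = ?I x" and x: "x \<in> dual_cone m (normal_cone m PM FM)" by blast
    have "w \<in> dual_cone n (normal_cone n P F)"
      unfolding dual_cone_def
    proof (intro CollectI conjI ballI)
      show "w \<in> qvec n" using w mapQ_qvec by simp
      fix y assume y: "y \<in> normal_cone n P F"
      have "adjQ n m i y \<in> normal_cone m PM FM"
        unfolding normal_cone_def
      proof (intro CollectI conjI subsetI adj_qvec)
        fix u assume u: "u \<in> FM"
        show "u \<in> face_at m PM (adjQ n m i y)"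
          unfolding face_at_def
        proof (intro CollectI conjI ballI)
          show "u \<in> PM" using u FP by (auto simp: FM_def PM_def)
          fix z assume z: "z \<in> PM"
          have "?I u \<in> face_at n P y" using y u by (auto simp: normal_cone_def FM_def)
          then have "pair n (?I u) y \<le> pair n (?I z) y" using z by (auto simp: face_at_def PM_def)
          then show "pair m u (adjQ n m i y) \<le> pair m z (adjQ n m i y)" by (simp add: pair_adj)
        qed
      qed
      with x have "pair m x (adjQ n m i y) \<ge> 0" by (auto simp: dual_cone_def)
      then show "pair n w y \<ge> 0" using w by (simp add: pair_adj)
    qed
    then show "w \<in> dual_cone n (normal_cone n P F) \<inter> ?I ` qvec m"
      using w x by (auto simp: dual_cone_def)
  next
    fix w assume wR: "w \<in> dual_cone n (normal_cone n P F) \<inter> ?I ` qvec m"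
    then obtain x where w: "w = ?I x" and xq: "x \<in> qvec m" by blast
    have wd: "w \<in> dual_cone n (normal_cone n P F)" using wR by blast
    have x0P: "x0 \<in> P" using x0F FP by blast
    have act: "\<forall>(a,c)\<in>H. pair n a x0 = c \<longrightarrow> pair n a w \<ge> 0"
    proof -
     have "pair n a w \<ge> 0" if ac: "(a,c) \<in> H" and eq: "pair n a x0 = c" for a c
     proof -
      have geF: "\<forall>x\<in>F. pair n a x \<ge> c" using FP ac Pdef by auto
      have "a \<in> normal_cone n P F"
        unfolding normal_cone_def
      proof (intro CollectI conjI subsetI)
        show "a \<in> qvec n" using Hq ac by auto
        fix u assume u: "u \<in> F"
        have uc: "pair n a u = c"
          by (rule relint_active[OF x0 _ geF eq u]) (use FP Pq in blast)
        show "u \<in> face_at n P a" unfolding face_at_def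
        proof (intro CollectI conjI ballI)
          show "u \<in> P" using u FP by blast
          fix z assume z: "z \<in> P"
          have "pair n a z \<ge> c" using z ac Pdef by auto
          thus "pair n u a \<le> pair n z a" using uc pair_comm[of n u a] pair_comm[of n z a] by simp
        qed
      qed
      with wd show "pair n a w \<ge> 0" by (auto simp: dual_cone_def pair_comm)
     qed
     thus ?thesis by auto
    qed
    have ge0: "\<forall>(a,c)\<in>H. pair n a x0 \<ge> c" using x0P Pdef by auto
    obtain \<epsilon> where e: "\<epsilon> > 0" and E: "\<forall>(a,c)\<in>H. pair n a (\<lambda>j. x0 j + \<epsilon> * w j) \<ge> c"
      using eps_exists[OF Hf ge0 act] by (metis order_refl)
    have Ieq: "?I (\<lambda>j. x0' j + \<epsilon> * x j) = (\<lambda>j. x0 j + \<epsilon> * w j)"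
      using x0e w by (simp add: mapQ_lin)
    have "(\<lambda>j. x0 j + \<epsilon> * w j) \<in> P"
    proof -
      have "(\<lambda>j. x0 j + \<epsilon> * w j) \<in> qvec n" using mapQ_qvec[of n m i "\<lambda>j. x0' j + \<epsilon> * x j"] Ieq by simp
      thus ?thesis using E unfolding Pdef by blast
    qed
    hence inPM: "(\<lambda>j. x0' j + \<epsilon> * x j) \<in> PM"
      using x0' xq Ieq by (auto simp: PM_def qvec_def)
    have x0FM: "x0' \<in> FM" using x0' x0F x0e by (simp add: FM_def)
    have "x \<in> dual_cone m (normal_cone m PM FM)"
      unfolding dual_cone_def
    proof (intro CollectI conjI ballI xq)
      fix y assume y: "y \<in> normal_cone m PM FM"
      then have "x0' \<in> face_at m PM y" using x0FM by (auto simp: normal_cone_def)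
      then have "pair m x0' y \<le> pair m (\<lambda>j. x0' j + \<epsilon> * x j) y" using inPM
        by (auto simp: face_at_def)
      then have "0 \<le> \<epsilon> * pair m x y" by (simp add: pair_lin1)
      then show "0 \<le> pair m x y" using e by (simp add: zero_le_mult_iff)
    qed
    then show "w \<in> ?I ` dual_cone m (normal_cone m PM FM)" using w by blast
  qed
qed

end
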